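(* Fix an integer $\kappa\ge1$ and sequences $x_1,\ldots,x_n$ and $y_1,\ldots,y_n$ in $\mathfrak{g}^{(\kappa)}(\mathbb{R}^d)$, and set $g_i=\pi_i(H(x_1,\ldots,x_n))$, $\tilde g_i=\pi_i(H(y_1,\ldots,y_n))$, where $H(x_1,\ldots,x_n)=\log(e^{x_1}\otimes\cdots\otimes e^{x_n})$. Then for every integer $1\le m\le\kappa$, $$\big\|\pi_m\big(e^{x_1}\otimes\cdots\otimes e^{x_n}-e^{y_1}\otimes\cdots\otimes e^{y_n}\big)\big\|_{(\mathbb{R}^d)^{\otimes m}}\le\sum_{k=1}^m\frac1{k!}\sum_{\substack{i_1,\ldots,i_k>0\\ i_1+\cdots+i_k=m}}\Big\|\sum_{j=1}^kg_{i_1}\otimes\cdots\otimes g_{i_{j-1}}\otimes(g_{i_j}-\tilde g_{i_j})\otimes\tilde g_{i_{j+1}}\otimes\cdots\otimes\tilde g_{i_k}\Big\|_{(\mathbb{R}^d)^{\otimes m}}.$$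
   Context: $T^{(\kappa)}(\mathbb{R}^d)=\bigoplus_{k=0}^\kappa(\mathbb{R}^d)^{\otimes k}$ is the truncated tensor algebra, $\pi_i$ projection onto $(\mathbb{R}^d)^{\otimes i}$, which carries the Euclidean norm in the basis $e_{j_1}\otimes\cdots\otimes e_{j_i}$. $e^{x}=\exp_\kappa(x)=\sum_{k=0}^\kappa x^{\otimes k}/k!$ and $\log(a)=\sum_{k=1}^\kappa\frac{(-1)^{k+1}}k(a-1)^{\otimes k}$ for $a$ with scalar part $1$. $\mathfrak{g}^{(\kappa)}(\mathbb{R}^d)$ is the free step-$\kappa$ nilpotent Lie algebra: the Lie subalgebra of $T^{(\kappa)}$ generated by $\mathbb{R}^d$ under $[a,b]=a\otimes b-b\otimes a$. *)

theory Defs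
  imports Complex_Main
begin

text \<open>An element is represented by its
coefficient function on words: a w is the coefficient of e_{w_1} (x) ... (x) e_{w_k}
where w = [w_1,...,w_k] (letters are indices, intended < d).  Only words of length
at most kappa carry nonzero coefficients for the algebra elements considered.\<close>

type_synonym tensor = "nat list \<Rightarrow> real"

definition words :: "nat \<Rightarrow> nat \<Rightarrow> nat list set" where
  "words d k = {w. length w = k \<and> set w \<subseteq> {..<d}}"

definition tmul :: "nat \<Rightarrow> tensor \<Rightarrow> tensor \<Rightarrow> tensor" where
  "tmul \<kappa> a b = (\<lambda>w. if length w \<le> \<kappa>
      then (\<Sum>i\<le>length w. a (take i w) * b (drop i w)) else 0)"

definition tone :: tensor where
  "tone = (\<lambda>w. if w = [] then 1 else 0)"

fun tpow :: "nat \<Rightarrow> tensor \<Rightarrow> nat \<Rightarrow> tensor" where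
  "tpow \<kappa> a 0 = tone"
| "tpow \<kappa> a (Suc n) = tmul \<kappa> a (tpow \<kappa> a n)"

definition tprod :: "nat \<Rightarrow> tensor list \<Rightarrow> tensor" where
  "tprod \<kappa> as = foldr (tmul \<kappa>) as tone"

definition proj :: "nat \<Rightarrow> tensor \<Rightarrow> tensor" where
  "proj i a = (\<lambda>w. if length w = i then a w else 0)"

definition texp :: "nat \<Rightarrow> tensor \<Rightarrow> tensor" where
  "texp \<kappa> x = (\<lambda>w. \<Sum>k\<le>\<kappa>. (1 / fact k) * tpow \<kappa> x k w)"

definition tlog :: "nat \<Rightarrow> tensor \<Rightarrow> tensor" where
  "tlog \<kappa> a = (\<lambda>w. \<Sum>k=1..\<kappa>.
      ((-1) ^ (k + 1) / real k) * tpow \<kappa> (\<lambda>v. a v - tone v) k w)"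

definition tnorm :: "nat \<Rightarrow> nat \<Rightarrow> tensor \<Rightarrow> real" where
  "tnorm d m a = sqrt (\<Sum>w\<in>words d m. (a w)\<^sup>2)"

text \<open>Free step-kappa nilpotent Lie algebra g^(kappa)(R^d): the Lie subalgebra
of T^(kappa)(R^d) generated by R^d (degree-one tensors) under [a,b] = a(x)b - b(x)a.\<close>
inductive_set lie_alg :: "nat \<Rightarrow> nat \<Rightarrow> tensor set" for d \<kappa> where
  gen: "(\<And>w. w \<notin> words d 1 \<Longrightarrow> v w = 0) \<Longrightarrow> v \<in> lie_alg d \<kappa>"
| add: "a \<in> lie_alg d \<kappa> \<Longrightarrow> b \<in> lie_alg d \<kappa> \<Longrightarrow> (\<lambda>w. a w + b w) \<in> lie_alg d \<kappa>"
| smult: "a \<in> lie_alg d \<kappa> \<Longrightarrow> (\<lambda>w. c * a w) \<in> lie_alg d \<kappa>"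
| bracket: "a \<in> lie_alg d \<kappa> \<Longrightarrow> b \<in> lie_alg d \<kappa> \<Longrightarrow>
     (\<lambda>w. tmul \<kappa> a b w - tmul \<kappa> b a w) \<in> lie_alg d \<kappa>"

definition expprod :: "nat \<Rightarrow> tensor list \<Rightarrow> tensor" where
  "expprod \<kappa> xs = tprod \<kappa> (map (texp \<kappa>) xs)"

definition Hcomp :: "nat \<Rightarrow> tensor list \<Rightarrow> nat \<Rightarrow> tensor" where
  "Hcomp \<kappa> xs i = proj i (tlog \<kappa> (expprod \<kappa> xs))"

definition compositions :: "nat \<Rightarrow> nat \<Rightarrow> nat list set" where
  "compositions k m = {is. length is = k \<and> (\<forall>i\<in>set is. 0 < i) \<and> sum_list is = m}"

end

theory Submission imports Defs "HOL-Analysis.L2_Norm" "HOL-Computational_Algebra.Formal_Power_Series"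
begin
unbundle fps_syntax

definition trunc :: "nat \<Rightarrow> tensor \<Rightarrow> tensor" where
  "trunc \<kappa> a = (\<lambda>w. if length w \<le> \<kappa> then a w else 0)"

lemma tmul_Nil[simp]: "tmul \<kappa> a b [] = a [] * b []"
  by (simp add: tmul_def)

lemma tmul_long: "\<kappa> < length w \<Longrightarrow> tmul \<kappa> a b w = 0"
  by (simp add: tmul_def)

lemma tmul_tone_left: "tmul \<kappa> tone b = trunc \<kappa> b"
proof
  fix w
  have "(\<Sum>i\<le>length w. tone (take i w) * b (drop i w)) = (\<Sum>i\<le>length w. if i = 0 then b w else 0)"
    by (rule sum.cong) (auto simp: tone_def)
  then show "tmul \<kappa> tone b w = trunc \<kappa> b w"
    by (simp add: tmul_def trunc_def)
qed

lemma tmul_tone_right: "tmul \<kappa> a tone = trunc \<kappa> a"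
proof
  fix w
  have "(\<Sum>i\<le>length w. a (take i w) * tone (drop i w)) = (\<Sum>i\<le>length w. if i = length w then a w else 0)"
    by (rule sum.cong) (auto simp: tone_def)
  then show "tmul \<kappa> a tone w = trunc \<kappa> a w"
    by (simp add: tmul_def trunc_def)
qed

lemma tmul_sum_left:
  "tmul \<kappa> (\<lambda>v. \<Sum>x\<in>S. c x * f x v) b w = (\<Sum>x\<in>S. c x * tmul \<kappa> (f x) b w)"
  by (simp add: tmul_def sum_distrib_left sum_distrib_right mult.assoc sum.swap[of _ S])

lemma tmul_sum_right:
  "tmul \<kappa> a (\<lambda>v. \<Sum>x\<in>S. c x * f x v) w = (\<Sum>x\<in>S. c x * tmul \<kappa> a (f x) w)"
  by (simp add: tmul_def sum_distrib_left sum_distrib_right mult.assoc mult.left_commute sum.swap[of _ S])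

lemma tmul_add_left: "tmul \<kappa> (\<lambda>v. a v + a' v) b w = tmul \<kappa> a b w + tmul \<kappa> a' b w"
  by (simp add: tmul_def distrib_right sum.distrib)
lemma tmul_diff_left: "tmul \<kappa> (\<lambda>v. a v - a' v) b w = tmul \<kappa> a b w - tmul \<kappa> a' b w"
  by (simp add: tmul_def left_diff_distrib sum_subtractf)
lemma tmul_diff_right: "tmul \<kappa> a (\<lambda>v. b v - b' v) w = tmul \<kappa> a b w - tmul \<kappa> a b' w"
  by (simp add: tmul_def right_diff_distrib sum_subtractf)

lemma tmul_assoc: "tmul \<kappa> (tmul \<kappa> a b) c = tmul \<kappa> a (tmul \<kappa> b c)"
proof
  fix w
  show "tmul \<kappa> (tmul \<kappa> a b) c w = tmul \<kappa> a (tmul \<kappa> b c) w"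
  proof (cases "length w \<le> \<kappa>")
    case False thus ?thesis by (simp add: tmul_def)
  next
    case True
    define n where "n = length w"
    define g where "g i j = a (take i w) * b (take j (drop i w)) * c (drop (i+j) w)" for i j
    have L: "tmul \<kappa> (tmul \<kappa> a b) c w = (\<Sum>k\<le>n. \<Sum>i\<le>k. g i (k - i))"
      unfolding tmul_def n_def[symmetric] using True
      by (auto simp: n_def g_def sum_distrib_right min_def take_drop intro!: sum.cong)
    have R: "tmul \<kappa> a (tmul \<kappa> b c) w = (\<Sum>i\<le>n. \<Sum>j\<le>n-i. g i j)"
      unfolding tmul_def n_def[symmetric] using True
      by (auto simp: n_def g_def sum_distrib_left mult.assoc add.commute intro!: sum.cong)
    have "(\<Sum>i\<le>n. \<Sum>j\<le>n-i. g i j) = (\<Sum>(i,j)\<in>{(i,j). i+j \<le> n}. g i j)"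
    proof -
      have "{(i,j). i+j \<le> n} = (SIGMA i:{..n}. {..n-i})" by auto
      then show ?thesis by (simp add: sum.Sigma)
    qed
    also have "\<dots> = (\<Sum>k\<le>n. \<Sum>i\<le>k. g i (k - i))" by (rule sum.triangle_reindex_eq)
    finally show ?thesis using L R by simp
  qed
qed

lemma tone_trunc: "trunc \<kappa> tone = tone"
  by (auto simp: trunc_def tone_def)

lemma tmul_trunc: "trunc \<kappa> (tmul \<kappa> a b) = tmul \<kappa> a b"
  by (auto simp: trunc_def tmul_def)

lemma tpow_trunc: "trunc \<kappa> (tpow \<kappa> u n) = tpow \<kappa> u n"
  by (cases n) (simp_all add: tone_trunc tmul_trunc)

lemma tpow_low: "u [] = 0 \<Longrightarrow> length w < n \<Longrightarrow> tpow \<kappa> u n w = 0"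
proof (induction n arbitrary: w)
  case 0 thus ?case by simp
next
  case (Suc n)
  have "(\<Sum>i\<le>length w. u (take i w) * tpow \<kappa> u n (drop i w)) = 0"
  proof (rule sum.neutral, intro ballI)
    fix i assume "i \<in> {..length w}"
    show "u (take i w) * tpow \<kappa> u n (drop i w) = 0"
    proof (cases "i = 0")
      case True thus ?thesis using Suc.prems by simp
    next
      case False
      hence "length (drop i w) < n" using Suc.prems \<open>i \<in> {..length w}\<close> by auto
      thus ?thesis using Suc.prems Suc.IH[of "drop i w"] by simp
    qed
  qed
  thus ?case by (simp add: tmul_def)
qed

lemma tpow_high: "u [] = 0 \<Longrightarrow> \<kappa> < n \<Longrightarrow> tpow \<kappa> u n w = 0"
proof (cases "length w < n")
  case True
  assume "u [] = 0" thus ?thesis using tpow_low True by blast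
next
  case False
  assume "\<kappa> < n"
  then obtain n' where "n = Suc n'" by (cases n) auto
  thus ?thesis using False \<open>\<kappa> < n\<close> by (simp add: tmul_long)
qed

lemma tpow_add: "tmul \<kappa> (tpow \<kappa> u i) (tpow \<kappa> u j) = tpow \<kappa> u (i + j)"
proof (induction i)
  case 0 thus ?case by (simp add: tmul_tone_left tpow_trunc)
next
  case (Suc i) thus ?case by (simp add: tmul_assoc)
qed

definition evf :: "nat \<Rightarrow> tensor \<Rightarrow> real fps \<Rightarrow> tensor" where
  "evf \<kappa> u f = (\<lambda>w. \<Sum>n\<le>\<kappa>. f $ n * tpow \<kappa> u n w)"

lemma evf_one: "evf \<kappa> u 1 = tone"
proof
  fix w
  have "(\<Sum>n\<le>\<kappa>. (1::real fps) $ n * tpow \<kappa> u n w) = (\<Sum>n\<le>\<kappa>. if n = 0 then tone w else 0)"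
    by (rule sum.cong) auto
  thus "evf \<kappa> u 1 w = tone w" by (simp add: evf_def)
qed

lemma evf_mult:
  assumes u0: "u [] = 0"
  shows "tmul \<kappa> (evf \<kappa> u f) (evf \<kappa> u g) = evf \<kappa> u (f * g)"
proof
  fix w
  define h where "h i j = f $ i * g $ j * tpow \<kappa> u (i + j) w" for i j
  have "tmul \<kappa> (evf \<kappa> u f) (evf \<kappa> u g) w = (\<Sum>i\<le>\<kappa>. \<Sum>j\<le>\<kappa>. h i j)"
    unfolding evf_def tmul_sum_left tmul_sum_right
    by (simp add: h_def tpow_add sum_distrib_left mult.assoc)
  also have "\<dots> = (\<Sum>(i,j)\<in>{..\<kappa>} \<times> {..\<kappa>}. h i j)"
    by (simp add: sum.cartesian_product)
  also have "\<dots> = (\<Sum>(i,j)\<in>{(i,j). i+j \<le> \<kappa>}. h i j)"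
  proof (rule sum.mono_neutral_right)
    show "finite ({..\<kappa>} \<times> {..\<kappa>})" by simp
    show "{(i, j). i + j \<le> \<kappa>} \<subseteq> {..\<kappa>} \<times> {..\<kappa>}" by auto
    show "\<forall>x\<in>{..\<kappa>} \<times> {..\<kappa>} - {(i, j). i + j \<le> \<kappa>}. (case x of (i, j) \<Rightarrow> h i j) = 0"
      using tpow_high[of u \<kappa> _ w, OF u0] by (auto simp: h_def not_le) (meson not_le)
  qed
  also have "\<dots> = (\<Sum>k\<le>\<kappa>. \<Sum>i\<le>k. h i (k - i))" by (rule sum.triangle_reindex_eq)
  also have "\<dots> = evf \<kappa> u (f * g) w"
    by (simp add: evf_def h_def fps_mult_nth atLeast0AtMost sum_distrib_right)
  finally show "tmul \<kappa> (evf \<kappa> u f) (evf \<kappa> u g) w = evf \<kappa> u (f * g) w" .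
qed

lemma tpow_evf: "u [] = 0 \<Longrightarrow> tpow \<kappa> (evf \<kappa> u f) j = evf \<kappa> u (f ^ j)"
  by (induction j) (simp_all add: evf_one evf_mult)

lemma evf_sum: "finite S \<Longrightarrow> (\<Sum>j\<in>S. c j * evf \<kappa> u (F j) w) = evf \<kappa> u (\<Sum>j\<in>S. fps_const (c j) * F j) w"
  by (simp add: evf_def fps_sum_nth sum_distrib_left sum_distrib_right mult.assoc sum.swap[of _ S])

lemma exp_ln: "fps_exp (1::real) oo fps_ln 1 = 1 + fps_X"
proof -
  have "(fps_exp (1::real) - 1) oo fps_ln 1 = fps_X"
    using fps_inv_fps_exp_compose(2)[of "1::real"] fps_ln_fps_exp_inv[of "1::real"] by simp
  hence "(fps_exp (1::real) oo fps_ln 1) - 1 = fps_X"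
    by (simp add: fps_compose_sub_distrib)
  thus ?thesis by (simp add: algebra_simps)
qed

lemma ln_pow_low: "n < j \<Longrightarrow> ((fps_ln (1::real)) ^ j) $ n = 0"
proof -
  assume "n < j"
  have "fps_ln (1::real) \<noteq> 0"
  proof
    assume "fps_ln (1::real) = 0"
    hence "fps_ln (1::real) $ 1 = 0" by simp
    thus False by (simp add: fps_ln_nth)
  qed
  hence "subdegree (fps_ln (1::real)) \<ge> 1"
    using subdegree_eq_0_iff[of "fps_ln (1::real)"] by auto
  hence "n < j * subdegree (fps_ln (1::real))" using \<open>n < j\<close>
    by (metis less_le_trans mult.right_neutral mult_le_mono2)
  thus ?thesis by (rule fps_pow_nth_below_subdegree)
qed

lemma exp_ln_coeff:
  assumes "n \<le> \<kappa>"
  shows "(\<Sum>j\<le>\<kappa>. (1 / fact j) * ((fps_ln (1::real)) ^ j) $ n) = (if n \<le> 1 then 1 else 0)"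
proof -
  have "(\<Sum>j\<le>\<kappa>. (1 / fact j) * ((fps_ln (1::real)) ^ j) $ n)
      = (\<Sum>j\<le>n. (1 / fact j) * ((fps_ln (1::real)) ^ j) $ n)"
    by (rule sum.mono_neutral_right) (use assms ln_pow_low in auto)
  also have "\<dots> = (fps_exp (1::real) oo fps_ln 1) $ n"
    by (simp add: fps_compose_nth atLeast0AtMost fps_exp_def)
  also have "\<dots> = (if n \<le> 1 then 1 else 0)"
    unfolding exp_ln by (auto simp: fps_X_def)
  finally show ?thesis .
qed

lemma tlog_evf: "tlog \<kappa> a = evf \<kappa> (\<lambda>v. a v - tone v) (fps_ln 1)"
proof
  fix w
  let ?u = "\<lambda>v. a v - tone v"
  have "evf \<kappa> ?u (fps_ln 1) w = (\<Sum>n\<in>insert 0 {1..\<kappa>}. fps_ln 1 $ n * tpow \<kappa> ?u n w)"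
    unfolding evf_def by (rule sum.cong) auto
  also have "\<dots> = (\<Sum>n=1..\<kappa>. fps_ln 1 $ n * tpow \<kappa> ?u n w)" by simp
  also have "\<dots> = tlog \<kappa> a w"
    unfolding tlog_def
  proof (rule sum.cong)
    fix k assume "k \<in> {1..\<kappa>}"
    then obtain k' where k': "k = Suc k'" by (cases k) auto
    hence "(-1::real) ^ (k + 1) = (-1) ^ (k - 1)" by simp
    thus "fps_ln 1 $ k * tpow \<kappa> ?u k w = (-1) ^ (k + 1) / real k * tpow \<kappa> ?u k w"
      using \<open>k \<in> {1..\<kappa>}\<close> by (simp add: fps_ln_nth)
  qed simp
  finally show "tlog \<kappa> a w = evf \<kappa> ?u (fps_ln 1) w" ..
qed

lemma texp_tlog:
  assumes a0: "a [] = 1" and k1: "1 \<le> \<kappa>" and lw: "length w \<le> \<kappa>"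
  shows "texp \<kappa> (tlog \<kappa> a) w = a w"
proof -
  let ?u = "\<lambda>v. a v - tone v"
  have u0: "?u [] = 0" using a0 by (simp add: tone_def)
  let ?L = "fps_ln (1::real)"
  have "texp \<kappa> (tlog \<kappa> a) w = (\<Sum>j\<le>\<kappa>. (1 / fact j) * evf \<kappa> ?u (?L ^ j) w)"
    unfolding texp_def tlog_evf tpow_evf[where u="?u", OF u0] ..
  also have "\<dots> = evf \<kappa> ?u (\<Sum>j\<le>\<kappa>. fps_const (1 / fact j) * ?L ^ j) w"
    by (rule evf_sum) simp
  also have "\<dots> = (\<Sum>n\<le>\<kappa>. (if n \<le> 1 then 1 else 0) * tpow \<kappa> ?u n w)"
    unfolding evf_def
  proof (rule sum.cong)
    fix n assume "n \<in> {..\<kappa>}"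
    hence "(\<Sum>j\<le>\<kappa>. fps_const (1 / fact j) * ?L ^ j) $ n = (if n \<le> 1 then 1 else 0)"
      by (subst fps_sum_nth, simp only: fps_mult_left_const_nth, intro exp_ln_coeff) simp
    thus "(\<Sum>j\<le>\<kappa>. fps_const (1 / fact j) * ?L ^ j) $ n * tpow \<kappa> ?u n w = (if n \<le> 1 then 1 else 0) * tpow \<kappa> ?u n w"
      by simp
  qed simp
  also have "\<dots> = (\<Sum>n\<in>{0,1}. tpow \<kappa> ?u n w)"
    by (rule sum.mono_neutral_cong_right) (use k1 in auto)
  also have "\<dots> = a w"
  proof -
    have "tpow \<kappa> ?u 1 w = ?u w" using lw by (simp add: tmul_tone_right trunc_def)
    thus ?thesis by simp
  qed
  finally show ?thesis .
qed

lemma comp_finite: "finite (compositions k m)"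
proof (rule finite_subset)
  show "compositions k m \<subseteq> {xs. set xs \<subseteq> {..m} \<and> length xs = k}"
    by (auto simp: compositions_def intro: member_le_sum_list)
  show "finite {xs. set xs \<subseteq> {..m} \<and> length xs = k}"
    by (rule finite_lists_length_eq) simp
qed

lemma comp_0: "compositions 0 m = (if m = 0 then {[]} else {})"
  by (auto simp: compositions_def)

lemma comp_Suc: "compositions (Suc k) m = (\<lambda>(i,is). i # is) ` (SIGMA i:{1..m}. compositions k (m - i))"
proof
  show "compositions (Suc k) m \<subseteq> (\<lambda>(i,is). i # is) ` (SIGMA i:{1..m}. compositions k (m - i))"
  proof
    fix xs assume "xs \<in> compositions (Suc k) m"
    then obtain i ys where xs: "xs = i # ys" and "length ys = k" "0 < i" "\<forall>j\<in>set ys. 0 < j"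
       "i + sum_list ys = m"
      by (cases xs) (auto simp: compositions_def)
    thus "xs \<in> (\<lambda>(i,is). i # is) ` (SIGMA i:{1..m}. compositions k (m - i))"
      by (auto simp: compositions_def image_iff)
  qed
  show "(\<lambda>(i,is). i # is) ` (SIGMA i:{1..m}. compositions k (m - i)) \<subseteq> compositions (Suc k) m"
    by (auto simp: compositions_def)
qed

lemma tmul_proj:
  assumes "length w = m" "m \<le> \<kappa>" "i \<le> m"
  shows "tmul \<kappa> (proj i H) T w = H (take i w) * T (drop i w)"
proof -
  have "(\<Sum>l\<le>length w. proj i H (take l w) * T (drop l w))
      = (\<Sum>l\<le>length w. if l = i then H (take i w) * T (drop i w) else 0)"
    by (rule sum.cong) (auto simp: proj_def min_def)
  thus ?thesis using assms by (simp add: tmul_def)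
qed

lemma tpow_comp:
  assumes H0: "H [] = 0"
  shows "length w = m \<Longrightarrow> m \<le> \<kappa> \<Longrightarrow>
    tpow \<kappa> H k w = (\<Sum>is\<in>compositions k m. tprod \<kappa> (map (\<lambda>i. proj i H) is) w)"
proof (induction k arbitrary: w m)
  case 0
  thus ?case by (auto simp: comp_0 tprod_def tone_def)
next
  case (Suc k)
  let ?T = "\<lambda>is. tprod \<kappa> (map (\<lambda>i. proj i H) is)"
  have "tpow \<kappa> H (Suc k) w = (\<Sum>i\<le>m. H (take i w) * tpow \<kappa> H k (drop i w))"
    using Suc.prems by (simp add: tmul_def)
  also have "\<dots> = (\<Sum>i\<in>{1..m}. H (take i w) * tpow \<kappa> H k (drop i w))"
    by (rule sum.mono_neutral_right) (use H0 in \<open>auto simp: Suc_le_eq\<close>)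
  also have "\<dots> = (\<Sum>i\<in>{1..m}. \<Sum>is\<in>compositions k (m - i). H (take i w) * ?T is (drop i w))"
    by (rule sum.cong) (use Suc.IH Suc.prems in \<open>auto simp: sum_distrib_left\<close>)
  also have "\<dots> = (\<Sum>(i,is)\<in>(SIGMA i:{1..m}. compositions k (m - i)). H (take i w) * ?T is (drop i w))"
    by (rule sum.Sigma) (auto simp: comp_finite)
  also have "\<dots> = (\<Sum>(i,is)\<in>(SIGMA i:{1..m}. compositions k (m - i)). ?T (i # is) w)"
    by (rule sum.cong) (use Suc.prems in \<open>auto simp: tprod_def tmul_proj\<close>)
  also have "\<dots> = (\<Sum>is\<in>compositions (Suc k) m. ?T is w)"
    unfolding comp_Suc by (subst sum.reindex) (auto simp: inj_on_def intro!: sum.cong)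
  finally show ?case .
qed

lemma lie0: "x \<in> lie_alg d \<kappa> \<Longrightarrow> x [] = 0"
  by (induction rule: lie_alg.induct) (auto simp: words_def)

lemma texp0: "x [] = 0 \<Longrightarrow> texp \<kappa> x [] = 1"
proof -
  assume x0: "x [] = 0"
  have "(\<Sum>k\<le>\<kappa>. (1 / fact k) * tpow \<kappa> x k []) = (\<Sum>k\<le>\<kappa>. if k = 0 then 1 else 0)"
    by (rule sum.cong) (auto simp: tone_def tpow_low[of x, OF x0])
  thus ?thesis by (simp add: texp_def)
qed

lemma expprod0: "\<forall>x\<in>set xs. x [] = 0 \<Longrightarrow> expprod \<kappa> xs [] = 1"
  by (induction xs) (auto simp: expprod_def tprod_def tone_def texp0)

lemma tlog0: "a [] = 1 \<Longrightarrow> tlog \<kappa> a [] = 0"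
proof -
  assume a0: "a [] = 1"
  have u0: "(\<lambda>v. a v - tone v) [] = 0" using a0 by (simp add: tone_def)
  show ?thesis unfolding tlog_def
    by (rule sum.neutral) (use tpow_low[of "\<lambda>v. a v - tone v", OF u0] in auto)
qed

lemma tmul_sum_right':
  "tmul \<kappa> a (\<lambda>v. \<Sum>x\<in>S. f x v) w = (\<Sum>x\<in>S. tmul \<kappa> a (f x) w)"
  using tmul_sum_right[of \<kappa> a "\<lambda>_. 1" f S w] by simp

lemma tele:
  "(\<lambda>w. tprod \<kappa> (map g xs) w - tprod \<kappa> (map g' xs) w) =
   (\<lambda>w. \<Sum>j<length xs. tprod \<kappa> (map g (take j xs) @ [(\<lambda>v. g (xs ! j) v - g' (xs ! j) v)]
            @ map g' (drop (Suc j) xs)) w)"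
proof (induction xs)
  case Nil thus ?case by simp
next
  case (Cons i xs)
  let ?A = "tprod \<kappa> (map g xs)" and ?B = "tprod \<kappa> (map g' xs)"
  let ?X = "\<lambda>j. tprod \<kappa> (map g (take j xs) @ [(\<lambda>v. g (xs ! j) v - g' (xs ! j) v)]
            @ map g' (drop (Suc j) xs))"
  show ?case
  proof
    fix w
    have "(\<Sum>j<length (i # xs). tprod \<kappa> (map g (take j (i # xs)) @ [(\<lambda>v. g ((i # xs) ! j) v - g' ((i # xs) ! j) v)]
            @ map g' (drop (Suc j) (i # xs))) w)
        = tmul \<kappa> (\<lambda>v. g i v - g' i v) ?B w + (\<Sum>j<length xs. tmul \<kappa> (g i) (?X j) w)"
      by (simp only: length_Cons sum.lessThan_Suc_shift) (simp add: tprod_def)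
    also have "(\<Sum>j<length xs. tmul \<kappa> (g i) (?X j) w) = tmul \<kappa> (g i) (\<lambda>v. \<Sum>j<length xs. ?X j v) w"
      by (simp add: tmul_sum_right')
    also have "\<dots> = tmul \<kappa> (g i) ?A w - tmul \<kappa> (g i) ?B w"
      unfolding Cons.IH[symmetric] by (simp add: tmul_diff_right)
    finally show "tprod \<kappa> (map g (i # xs)) w - tprod \<kappa> (map g' (i # xs)) w = (\<Sum>j<length (i # xs). tprod \<kappa> (map g (take j (i # xs)) @ [(\<lambda>v. g ((i # xs) ! j) v - g' ((i # xs) ! j) v)]
            @ map g' (drop (Suc j) (i # xs))) w)"
      by (simp add: tprod_def tmul_diff_left)
  qed
qed

lemma tnorm_cong: "(\<And>w. w \<in> words d m \<Longrightarrow> f w = g w) \<Longrightarrow> tnorm d m f = tnorm d m g"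
  by (simp add: tnorm_def)

lemma tnorm_L2: "tnorm d m f = L2_set f (words d m)"
  by (simp add: tnorm_def L2_set_def)

lemma tnorm_sum: "finite S \<Longrightarrow> tnorm d m (\<lambda>w. \<Sum>x\<in>S. F x w) \<le> (\<Sum>x\<in>S. tnorm d m (F x))"
proof (induction S rule: finite_induct)
  case empty thus ?case by (simp add: tnorm_def)
next
  case (insert x S)
  have "tnorm d m (\<lambda>w. \<Sum>x\<in>insert x S. F x w) = tnorm d m (\<lambda>w. F x w + (\<Sum>x\<in>S. F x w))"
    using insert by simp
  also have "\<dots> \<le> tnorm d m (F x) + tnorm d m (\<lambda>w. \<Sum>x\<in>S. F x w)"
    unfolding tnorm_L2 by (rule L2_set_triangle_ineq)
  also have "\<dots> \<le> tnorm d m (F x) + (\<Sum>x\<in>S. tnorm d m (F x))" using insert by simp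
  finally show ?case using insert by simp
qed

lemma tnorm_scale: "0 \<le> c \<Longrightarrow> tnorm d m (\<lambda>w. c * f w) = c * tnorm d m f"
  unfolding tnorm_L2 by (simp add: L2_set_right_distrib)

lemma expand:
  assumes a0: "a [] = 1" and "1 \<le> m" "m \<le> \<kappa>" "length w = m"
  shows "a w = (\<Sum>k=1..m. (1 / fact k) * (\<Sum>is\<in>compositions k m.
                 tprod \<kappa> (map (\<lambda>i. proj i (tlog \<kappa> a)) is) w))"
proof -
  let ?H = "tlog \<kappa> a"
  have H0: "?H [] = 0" using tlog0[of a, OF a0] .
  have "a w = texp \<kappa> ?H w" using texp_tlog[of a, OF a0] assms by simp
  also have "\<dots> = (\<Sum>k\<le>\<kappa>. (1 / fact k) * tpow \<kappa> ?H k w)" by (simp add: texp_def)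
  also have "(\<Sum>k\<le>\<kappa>. (1 / fact k) * tpow \<kappa> ?H k w) = (\<Sum>k=1..m. (1 / fact k) * tpow \<kappa> ?H k w)"
  proof (rule sum.mono_neutral_left[symmetric])
    show "\<forall>k\<in>{..\<kappa>} - {1..m}. 1 / fact k * tpow \<kappa> ?H k w = 0"
    proof
      fix k assume k: "k \<in> {..\<kappa>} - {1..m}"
      show "1 / fact k * tpow \<kappa> ?H k w = 0"
      proof (cases "k = 0")
        case True thus ?thesis using assms by (auto simp: tone_def)
      next
        case False
        hence "length w < k" using k assms by auto
        thus ?thesis using tpow_low[of ?H, OF H0] by simp
      qed
    qed
    show "finite {..\<kappa>}" by simp
    show "{1..m} \<subseteq> {..\<kappa>}" using assms by auto
  qed
  also have "\<dots> = (\<Sum>k=1..m. (1 / fact k) * (\<Sum>is\<in>compositions k m.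
                 tprod \<kappa> (map (\<lambda>i. proj i (tlog \<kappa> a)) is) w))"
    using tpow_comp[of ?H, OF H0] assms by simp
  finally show ?thesis .
qed

theorem lemma11p3:
  fixes d \<kappa> m :: nat and xs ys :: "tensor list"
  assumes "1 \<le> \<kappa>"
    and "length xs = length ys"
    and "\<forall>x\<in>set xs. x \<in> lie_alg d \<kappa>"
    and "\<forall>y\<in>set ys. y \<in> lie_alg d \<kappa>"
    and "1 \<le> m" and "m \<le> \<kappa>"
  shows "tnorm d m (proj m (\<lambda>w. expprod \<kappa> xs w - expprod \<kappa> ys w))
    \<le> (\<Sum>k=1..m. (1 / fact k) *
         (\<Sum>is\<in>compositions k m.
            tnorm d m (\<lambda>w. \<Sum>j<k.
              tprod \<kappa> (map (Hcomp \<kappa> xs) (take j is)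
                       @ [(\<lambda>v. Hcomp \<kappa> xs (is ! j) v - Hcomp \<kappa> ys (is ! j) v)]
                       @ map (Hcomp \<kappa> ys) (drop (Suc j) is)) w)))"
proof -
  let ?a = "expprod \<kappa> xs" and ?b = "expprod \<kappa> ys"
  let ?g = "Hcomp \<kappa> xs" and ?g' = "Hcomp \<kappa> ys"
  define D where "D k is = (\<lambda>w. \<Sum>j<k.
              tprod \<kappa> (map (Hcomp \<kappa> xs) (take j is)
                       @ [(\<lambda>v. Hcomp \<kappa> xs (is ! j) v - Hcomp \<kappa> ys (is ! j) v)]
                       @ map (Hcomp \<kappa> ys) (drop (Suc j) is)) w)" for k "is"
  define G where "G k = (\<lambda>w. \<Sum>is\<in>compositions k m. D k is w)" for k
  have a0: "?a [] = 1" using assms(3) lie0 expprod0 by metis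
  have b0: "?b [] = 1" using assms(4) lie0 expprod0 by metis
  have ga: "?g = (\<lambda>i. proj i (tlog \<kappa> ?a))" by (rule ext) (simp add: Hcomp_def)
  have gb: "?g' = (\<lambda>i. proj i (tlog \<kappa> ?b))" by (rule ext) (simp add: Hcomp_def)
  have key: "proj m (\<lambda>w. ?a w - ?b w) w = (\<Sum>k=1..m. (1 / fact k) * G k w)"
    if w: "w \<in> words d m" for w
  proof -
    have lw: "length w = m" using w by (simp add: words_def)
    have "?a w - ?b w = (\<Sum>k=1..m. (1 / fact k) * (\<Sum>is\<in>compositions k m.
                 tprod \<kappa> (map ?g is) w - tprod \<kappa> (map ?g' is) w))"
      using expand[of ?a m \<kappa> w, OF a0] expand[of ?b m \<kappa> w, OF b0] assms lw
      unfolding ga gb by (simp add: sum_subtractf right_diff_distrib)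
    also have "\<dots> = (\<Sum>k=1..m. (1 / fact k) * G k w)"
    proof (rule sum.cong[OF refl])
      fix k assume "k \<in> {1..m}"
      have "(\<Sum>is\<in>compositions k m. tprod \<kappa> (map ?g is) w - tprod \<kappa> (map ?g' is) w)
          = (\<Sum>is\<in>compositions k m. D k is w)"
      proof (rule sum.cong[OF refl])
        fix "is" assume "is \<in> compositions k m"
        hence "length is = k" by (simp add: compositions_def)
        thus "tprod \<kappa> (map ?g is) w - tprod \<kappa> (map ?g' is) w = D k is w"
          using fun_cong[OF tele[of \<kappa> ?g "is" ?g'], of w] by (simp add: D_def)
      qed
      thus "1 / fact k * (\<Sum>is\<in>compositions k m. tprod \<kappa> (map ?g is) w - tprod \<kappa> (map ?g' is) w)
          = 1 / fact k * G k w" by (simp add: G_def)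
    qed
    finally show ?thesis using lw by (simp add: proj_def)
  qed
  have "tnorm d m (proj m (\<lambda>w. ?a w - ?b w)) = tnorm d m (\<lambda>w. \<Sum>k=1..m. (1 / fact k) * G k w)"
    by (rule tnorm_cong) (rule key)
  also have "\<dots> \<le> (\<Sum>k=1..m. tnorm d m (\<lambda>w. (1 / fact k) * G k w))"
    by (rule tnorm_sum) simp
  also have "\<dots> = (\<Sum>k=1..m. (1 / fact k) * tnorm d m (G k))"
    by (rule sum.cong[OF refl], rule tnorm_scale) simp
  also have "\<dots> \<le> (\<Sum>k=1..m. (1 / fact k) * (\<Sum>is\<in>compositions k m. tnorm d m (D k is)))"
  proof (rule sum_mono)
    fix k assume "k \<in> {1..m}"
    have "tnorm d m (G k) \<le> (\<Sum>is\<in>compositions k m. tnorm d m (D k is))"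
      unfolding G_def by (rule tnorm_sum) (simp add: comp_finite)
    thus "1 / fact k * tnorm d m (G k) \<le> 1 / fact k * (\<Sum>is\<in>compositions k m. tnorm d m (D k is))"
      by (rule mult_left_mono) simp
  qed
  finally show ?thesis by (simp add: D_def)
qed

end
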